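(* For every positive integer $k$, $$\sum_{j=0}^{2k-1} (-1)^j \sin^2\left(\frac{(2j+1)\pi}{8k+2}\right) = \frac{-\sin^2\left(\frac{2k\pi}{4k+1}\right)}{2\cos\left(\frac{\pi}{4k+1}\right)}$$ and $$\sum_{j=0}^{2k} (-1)^j \sin^2\left(\frac{(2j+1)\pi}{8k+6}\right) = \frac{1}{2} - \frac{\cos^2\left(\frac{(2k+1)\pi}{4k+3}\right)}{2\cos\left(\frac{\pi}{4k+3}\right)}.$$ Consequently $$\lim_{k\to\infty}\sum_{j=0}^{2k-1} (-1)^j \sin^2\left(\frac{(2j+1)\pi}{8k+2}\right) = -\frac12 \quad\text{and}\quad \lim_{k\to\infty}\sum_{j=0}^{2k} (-1)^j \sin^2\left(\frac{(2j+1)\pi}{8k+6}\right) = \frac12.$$ *)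

theory Defs
  imports Complex_Main
begin

end

theory Submission
  imports Defs "HOL-Real_Asymp.Real_Asymp"
begin

lemma tele:
  fixes p :: real
  shows "2 * cos p * (\<Sum>j<N. (-1)^j * cos ((2*real j+1)*p)) = 1 - (-1)^N * cos (2*real N*p)"
proof (induction N)
  case 0
  then show ?case by simp
next
  case (Suc N)
  have c: "2 * cos p * cos ((2*real N+1)*p) = cos (2*real N*p) + cos (2*real (Suc N)*p)"
  proof -
    have "2 * cos p * cos ((2*real N+1)*p) = cos ((2*real N+1)*p - p) + cos ((2*real N+1)*p + p)"
      using cos_times_cos[of "(2*real N+1)*p" p] by (simp add: mult.commute)
    also have "(2*real N+1)*p - p = 2*real N*p" by (simp add: algebra_simps)
    also have "(2*real N+1)*p + p = 2*real (Suc N)*p" by (simp add: algebra_simps)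
    finally show ?thesis .
  qed
  have "2 * cos p * (\<Sum>j<Suc N. (-1)^j * cos ((2*real j+1)*p))
      = 2 * cos p * (\<Sum>j<N. (-1)^j * cos ((2*real j+1)*p)) + (-1)^N * (2 * cos p * cos ((2*real N+1)*p))"
    by (simp add: algebra_simps)
  also have "\<dots> = 1 - (-1)^Suc N * cos (2*real (Suc N)*p)"
    unfolding Suc.IH c by (simp add: algebra_simps)
  finally show ?case .
qed

lemma altsum: "(\<Sum>j<N. (-1::real)^j) = (1 - (-1)^N)/2"
  by (induction N) (auto simp: algebra_simps)

lemma main:
  fixes p :: real
  shows "2 * cos p * (\<Sum>j<N. (-1)^j * (sin ((2*real j+1)*p/2))^2)
     = cos p * (1 - (-1)^N)/2 - (1 - (-1)^N * cos (2*real N*p))/2"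
proof -
  have s: "(sin ((2*real j+1)*p/2))^2 = (1 - cos ((2*real j+1)*p))/2" for j
    using cos_double_sin[of "(2*real j+1)*p/2"] by simp
  have "(\<Sum>j<N. (-1)^j * (sin ((2*real j+1)*p/2))^2)
     = (\<Sum>j<N. (-1::real)^j)/2 - (\<Sum>j<N. (-1)^j * cos ((2*real j+1)*p))/2"
    unfolding s by (simp add: sum_subtractf sum_divide_distrib right_diff_distrib diff_divide_distrib)
  note e = this
  have "2 * cos p * (\<Sum>j<N. (-1)^j * (sin ((2*real j+1)*p/2))^2)
     = cos p * (\<Sum>j<N. (-1::real)^j) - (2 * cos p * (\<Sum>j<N. (-1)^j * cos ((2*real j+1)*p)))/2"
    by (subst e) (simp add: algebra_simps)
  also have "\<dots> = cos p * (1 - (-1)^N)/2 - (1 - (-1)^N * cos (2*real N*p))/2"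
    unfolding tele altsum by simp
  finally show ?thesis .
qed


lemma cospos:
  fixes x :: real assumes "x \<ge> 3" shows "cos (pi / x) > 0"
proof -
  have "pi / x > 0" using assms by simp
  moreover have "pi / x < pi/2" using assms by (simp add: divide_less_eq pi_gt_zero)
  ultimately show ?thesis by (intro cos_gt_zero_pi) auto
qed

lemma first:
  fixes k :: nat assumes "k \<ge> 1"
  shows "(\<Sum>j=0..2*k-1. (-1::real)^j * (sin ((2*real j+1)*pi/(8*real k+2)))^2)
              = - ((sin (2*real k*pi/(4*real k+1)))^2) / (2 * cos (pi/(4*real k+1)))"
proof -
  define p where "p = pi/(4*real k+1)"
  have r: "{0..2*k-1} = {..<2*k}" using assms by auto
  have a: "(2*real j+1)*pi/(8*real k+2) = (2*real j+1)*p/2" for j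
    unfolding p_def by (simp add: field_simps)
  have c: "cos p > 0" unfolding p_def using assms by (intro cospos) simp
  have m: "2 * cos p * (\<Sum>j<2*k. (-1)^j * (sin ((2*real j+1)*p/2))^2)
     = - ((sin (2*real k*p))^2)"
    using main[of p "2*k"] cos_double_sin[of "2*real k*p"] by (simp add: algebra_simps)
  have b: "2*real k*pi/(4*real k+1) = 2*real k*p" unfolding p_def by simp
  show ?thesis unfolding r a b using m c unfolding p_def[symmetric]
    by (simp add: field_simps mult.assoc)
qed

lemma second:
  fixes k :: nat assumes "k \<ge> 1"
  shows "(\<Sum>j=0..2*k. (-1::real)^j * (sin ((2*real j+1)*pi/(8*real k+6)))^2)
              = 1/2 - (cos ((2*real k+1)*pi/(4*real k+3)))^2 / (2 * cos (pi/(4*real k+3)))"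
proof -
  define p where "p = pi/(4*real k+3)"
  have r: "{0..2*k} = {..<2*k+1}" by auto
  have a: "(2*real j+1)*pi/(8*real k+6) = (2*real j+1)*p/2" for j
    unfolding p_def by (simp add: field_simps)
  have c: "cos p > 0" unfolding p_def using assms by (intro cospos) simp
  have m: "2 * cos p * (\<Sum>j<2*k+1. (-1)^j * (sin ((2*real j+1)*p/2))^2)
     = cos p - (cos ((2*real k+1)*p))^2"
    using main[of p "2*k+1"] cos_double_cos[of "(2*real k+1)*p"] by (simp add: algebra_simps)
  have b: "(2*real k+1)*pi/(4*real k+3) = (2*real k+1)*p" unfolding p_def by simp
  show ?thesis unfolding r a b using m c unfolding p_def[symmetric]
    by (simp add: field_simps)
qed

theorem proposition4:
  shows "(\<forall>k::nat. k \<ge> 1 \<longrightarrow>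
            (\<Sum>j=0..2*k-1. (-1::real)^j * (sin ((2*real j+1)*pi/(8*real k+2)))^2)
              = - ((sin (2*real k*pi/(4*real k+1)))^2) / (2 * cos (pi/(4*real k+1))))
       \<and> (\<forall>k::nat. k \<ge> 1 \<longrightarrow>
            (\<Sum>j=0..2*k. (-1::real)^j * (sin ((2*real j+1)*pi/(8*real k+6)))^2)
              = 1/2 - (cos ((2*real k+1)*pi/(4*real k+3)))^2 / (2 * cos (pi/(4*real k+3))))
       \<and> ((\<lambda>k::nat. \<Sum>j=0..2*k-1. (-1::real)^j * (sin ((2*real j+1)*pi/(8*real k+2)))^2)
            \<longlonglongrightarrow> - (1/2))
       \<and> ((\<lambda>k::nat. \<Sum>j=0..2*k. (-1::real)^j * (sin ((2*real j+1)*pi/(8*real k+6)))^2)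
            \<longlonglongrightarrow> 1/2)"
proof (intro conjI)
  have l1: "(\<lambda>k::nat. - ((sin (2*real k*pi/(4*real k+1)))^2) / (2 * cos (pi/(4*real k+1)))) \<longlonglongrightarrow> -(1/2)"
    by real_asymp
  have l2: "(\<lambda>k::nat. 1/2 - (cos ((2*real k+1)*pi/(4*real k+3)))^2 / (2 * cos (pi/(4*real k+3)))) \<longlonglongrightarrow> 1/2"
    by real_asymp
  show "(\<lambda>k::nat. \<Sum>j=0..2*k-1. (-1::real)^j * (sin ((2*real j+1)*pi/(8*real k+2)))^2)
            \<longlonglongrightarrow> - (1/2)"
    using l1 by (rule Lim_transform_eventually)
      (rule eventually_mono[OF eventually_ge_at_top[of "1::nat"]], rule first[symmetric], assumption)
  show "(\<lambda>k::nat. \<Sum>j=0..2*k. (-1::real)^j * (sin ((2*real j+1)*pi/(8*real k+6)))^2)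
            \<longlonglongrightarrow> 1/2"
    using l2 by (rule Lim_transform_eventually)
      (rule eventually_mono[OF eventually_ge_at_top[of "1::nat"]], rule second[symmetric], assumption)
qed (use first second in auto)

end
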